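(* Let $0\le\alpha<n$, $m$ a nonnegative integer, $0<\eta\le1$, $0<\delta<\min\{\eta,(n-\alpha)/m\}$, $1\le r\le\infty$, $\tilde\alpha=m\delta+\alpha$, $\tilde\delta\le\delta$. A pair of weights $(w,v)$ belongs to $\mathbb{H}(r,\tilde\alpha,\tilde\delta)$ if and only if there is $C$ such that the two inequalities $$|B|^{\frac{\tilde\alpha-\tilde\delta}{n}-\frac1r}\Big(\frac{1}{|B|}\int_Bv^{r'}(y)\,dy\Big)^{1/r'}\le C\frac{w(B)}{|B|}\quad\text{(local)}$$ and $$|B|^{\frac{\delta-\tilde\delta}{n}}\Big(\int_{\mathbb{R}^n\setminus B}\frac{v^{r'}(y)}{|x_B-y|^{r'(n-\tilde\alpha+\delta)}}dy\Big)^{1/r'}\le C\frac{w(B)}{|B|}\quad\text{(global)}$$ hold simultaneously for every ball $B\subset\mathbb{R}^n$ with center $x_B$.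
   Context: A weight is a nonnegative locally integrable function; $w(B)=\int_Bw$; $r'$ is the conjugate exponent, and when $r'=\infty$ the $L^{r'}$ averages/integrals are read as $L^\infty$ norms. $(w,v)\in\mathbb{H}(r,\tilde\alpha,\tilde\delta)$ means that for some $C$ and every ball $B$: if $1<r\le\infty$, $|B|^{(\delta-\tilde\delta)/n}\big(\int\frac{v^{r'}(y)}{(|B|^{1/n}+|x_B-y|)^{r'(n-\tilde\alpha+\delta)}}dy\big)^{1/r'}\le C\frac{w(B)}{|B|}$; if $r=1$, $|B|^{(\delta-\tilde\delta)/n}\big\|\frac{v(\cdot)}{(|B|^{1/n}+|x_B-\cdot|)^{n-\tilde\alpha+\delta}}\big\|_\infty\le C\frac{w(B)}{|B|}$. If $m=0$, $(n-\alpha)/m$ is read as $+\infty$. *)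

theory Defs
  imports "HOL-Analysis.Analysis" "HOL-Probability.Essential_Supremum"
begin

definition weight :: "('a::euclidean_space \<Rightarrow> real) \<Rightarrow> bool" where
  "weight w \<longleftrightarrow> (\<forall>x. 0 \<le> w x) \<and> (\<forall>K. compact K \<longrightarrow> set_integrable lebesgue K w)"

definition conj_exp :: "ereal \<Rightarrow> ereal" where
  "conj_exp r = (if r = 1 then \<infinity> else if r = \<infinity> then 1
                 else ereal (real_of_ereal r / (real_of_ereal r - 1)))"

definition inv_exp :: "ereal \<Rightarrow> real" where
  "inv_exp r = (if r = \<infinity> then 0 else 1 / real_of_ereal r)"

definition root_ereal :: "real \<Rightarrow> ennreal \<Rightarrow> ereal" where
  "root_ereal p I = (if I = \<infinity> then \<infinity> else ereal (enn2real I powr (1 / p)))"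

text \<open>The class H(r, alpha~, delta~) (depending also on delta), on R^n with n = DIM('a).
  Balls B = ball x rho, rho > 0; |B| is Lebesgue measure, w(B) the integral of w over B.\<close>
definition inH :: "ereal \<Rightarrow> real \<Rightarrow> real \<Rightarrow> real \<Rightarrow>
    ('a::euclidean_space \<Rightarrow> real) \<Rightarrow> ('a \<Rightarrow> real) \<Rightarrow> bool" where
  "inH r alt dt d w v \<longleftrightarrow> (\<exists>C::real. \<forall>x::'a. \<forall>\<rho>>0.
     (let B = ball x \<rho>; mB = measure lebesgue B; N = real DIM('a);
          r' = real_of_ereal (conj_exp r) in
      ereal (mB powr ((d - dt) / N)) *
        (if 1 < r then
           root_ereal r' (\<integral>\<^sup>+ y. ennreal (v y powr r' /
               (mB powr (1 / N) + norm (x - y)) powr (r' * (N - alt + d))) \<partial>lebesgue)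
         else esssup lebesgue (\<lambda>y. ereal (v y / (mB powr (1 / N) + norm (x - y)) powr (N - alt + d))))
      \<le> ereal (C * set_lebesgue_integral lebesgue B w / mB)))"

definition local_cond :: "ereal \<Rightarrow> real \<Rightarrow> real \<Rightarrow> real \<Rightarrow>
    ('a::euclidean_space \<Rightarrow> real) \<Rightarrow> ('a \<Rightarrow> real) \<Rightarrow> 'a \<Rightarrow> real \<Rightarrow> bool" where
  "local_cond r alt dt C w v x \<rho> \<longleftrightarrow>
     (let B = ball x \<rho>; mB = measure lebesgue B; N = real DIM('a);
          r' = real_of_ereal (conj_exp r) in
      ereal (mB powr ((alt - dt) / N - inv_exp r)) *
        (if 1 < r then
           root_ereal r' (ennreal (1 / mB) * (\<integral>\<^sup>+ y\<in>B. ennreal (v y powr r') \<partial>lebesgue))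
         else esssup (restrict_space lebesgue B) (\<lambda>y. ereal (v y)))
      \<le> ereal (C * set_lebesgue_integral lebesgue B w / mB))"

definition global_cond :: "ereal \<Rightarrow> real \<Rightarrow> real \<Rightarrow> real \<Rightarrow> real \<Rightarrow>
    ('a::euclidean_space \<Rightarrow> real) \<Rightarrow> ('a \<Rightarrow> real) \<Rightarrow> 'a \<Rightarrow> real \<Rightarrow> bool" where
  "global_cond r alt dt d C w v x \<rho> \<longleftrightarrow>
     (let B = ball x \<rho>; mB = measure lebesgue B; N = real DIM('a);
          r' = real_of_ereal (conj_exp r) in
      ereal (mB powr ((d - dt) / N)) *
        (if 1 < r then
           root_ereal r' (\<integral>\<^sup>+ y\<in>(UNIV - B). ennreal (v y powr r' /
               norm (x - y) powr (r' * (N - alt + d))) \<partial>lebesgue)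
         else esssup (restrict_space lebesgue (UNIV - B))
                (\<lambda>y. ereal (v y / norm (x - y) powr (N - alt + d))))
      \<le> ereal (C * set_lebesgue_integral lebesgue B w / mB))"

end

theory Submission
  imports Defs
begin


lemma ball_measure:
  fixes x :: "'a::euclidean_space"
  assumes "\<rho> > 0"
  shows "measure lebesgue (ball x \<rho>) = unit_ball_vol (real DIM('a)) * \<rho> ^ DIM('a)"
  using content_ball[of \<rho> x] assms by (simp add: measure_completion)

lemma ball_measure_root:
  fixes x :: "'a::euclidean_space"
  assumes "\<rho> > 0"
  shows "measure lebesgue (ball x \<rho>) powr (1 / real DIM('a)) =
     unit_ball_vol (real DIM('a)) powr (1 / real DIM('a)) * \<rho>"
proof -
  have "(unit_ball_vol (real DIM('a)) * \<rho> ^ DIM('a)) powr (1 / real DIM('a)) =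
     unit_ball_vol (real DIM('a)) powr (1 / real DIM('a)) * (\<rho> ^ DIM('a)) powr (1 / real DIM('a))"
    using assms by (simp add: powr_mult)
  also have "(\<rho> ^ DIM('a)) powr (1 / real DIM('a)) = \<rho>"
    using assms by (simp add: powr_realpow[symmetric] powr_powr)
  finally show ?thesis using ball_measure[OF assms, of x] by simp
qed

lemma weight_meas:
  fixes v :: "'a::euclidean_space \<Rightarrow> real"
  assumes "weight v"
  shows "v \<in> borel_measurable lebesgue"
proof (rule borel_measurable_LIMSEQ_real)
  fix i :: nat
  have "set_integrable lebesgue (cball 0 (real i)) v" using assms unfolding weight_def by auto
  then show "(\<lambda>y. indicator (cball 0 (real i)) y * v y) \<in> borel_measurable lebesgue"
    unfolding set_integrable_def by (auto dest: borel_measurable_integrable)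
next
  fix y :: 'a
  show "(\<lambda>i. indicator (cball 0 (real i)) y * v y) \<longlonglongrightarrow> v y"
  proof (rule tendsto_eventually)
    obtain n :: nat where "norm y \<le> real n" using real_arch_simple by blast
    then show "\<forall>\<^sub>F i in sequentially. indicator (cball 0 (real i)) y * v y = v y"
      unfolding eventually_sequentially
      by (intro exI[of _ n]) (auto simp: indicator_def)
  qed
qed

lemma esssup_le_iff:
  fixes f :: "'b \<Rightarrow> ereal"
  assumes "f \<in> borel_measurable M"
  shows "esssup M f \<le> c \<longleftrightarrow> (AE y in M. f y \<le> c)"
  using esssup_AE[of f M] esssup_I[OF assms]
  by (auto elim: eventually_mono)

lemma ereal_mult_le_iff:
  assumes "A > 0"
  shows "ereal A * E \<le> ereal R \<longleftrightarrow> E \<le> ereal (R / A)"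
  using assms by (cases E) (auto simp: field_simps)

lemma root_le_iff:
  assumes "A > 0"
  shows "ereal A * root_ereal s X \<le> ereal R \<longleftrightarrow> X \<noteq> \<infinity> \<and> A * enn2real X powr (1 / s) \<le> R"
  using assms by (auto simp: root_ereal_def)

lemma powr_subadd:
  fixes x y s :: real
  assumes "0 \<le> x" "0 \<le> y" "0 < s" "s \<le> 1"
  shows "(x + y) powr s \<le> x powr s + y powr s"
proof (cases "x + y = 0")
  case True then show ?thesis using assms by simp
next
  case False
  then have xy: "x + y > 0" using assms by linarith
  have t: "t \<le> t powr s" if "0 \<le> t" "t \<le> 1" for t :: real
  proof (cases "t = 0")
    case False
    then have "t powr 1 \<le> t powr s" using that assms by (intro powr_mono') auto
    then show ?thesis using that False by simp
  qed simp
  have "(x + y) powr s * (x / (x+y)) \<le> (x + y) powr s * (x / (x+y)) powr s"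
    using t[of "x/(x+y)"] assms xy by (intro mult_left_mono) auto
  also have "\<dots> = x powr s" using assms xy by (simp add: powr_divide)
  finally have 1: "(x + y) powr s * (x / (x+y)) \<le> x powr s" .
  have "(x + y) powr s * (y / (x+y)) \<le> (x + y) powr s * (y / (x+y)) powr s"
    using t[of "y/(x+y)"] assms xy by (intro mult_left_mono) auto
  also have "\<dots> = y powr s" using assms xy by (simp add: powr_divide)
  finally have 2: "(x + y) powr s * (y / (x+y)) \<le> y powr s" .
  have "(x + y) powr s = (x + y) powr s * (x / (x+y)) + (x + y) powr s * (y / (x+y))"
    using xy by (simp add: distrib_left[symmetric] add_divide_distrib[symmetric])
  then show ?thesis using 1 2 by linarith
qed



lemma AE_ball_nontriv:
  fixes x :: "'a::euclidean_space"
  assumes "\<rho> > 0" "AE y in lebesgue. y \<in> ball x \<rho> \<longrightarrow> P"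
  shows P
proof (rule ccontr)
  assume "\<not> P"
  then have "AE y in lebesgue. y \<notin> ball x \<rho>" using assms(2) by simp
  then have "emeasure lebesgue {y \<in> space lebesgue. \<not> y \<notin> ball x \<rho>} = 0"
    by (subst AE_iff_measurable[OF _ refl, symmetric]) auto
  then have "measure lebesgue (ball x \<rho>) = 0" by (simp add: measure_def ball_def)
  then show False using ball_measure[OF assms(1), of x] assms(1) by simp
qed

lemma kappa_pos: "unit_ball_vol (real DIM('a::euclidean_space)) powr (1 / real DIM('a)) > 0"
proof -
  have "unit_ball_vol (real DIM('a)) > 0" by (rule unit_ball_vol_pos) simp
  then have "unit_ball_vol (real DIM('a)) \<noteq> 0" by linarith
  then show ?thesis by simp
qed

lemma id_leb_meas[measurable]: "(\<lambda>x::'a::euclidean_space. x) \<in> lebesgue \<rightarrow>\<^sub>M borel"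
  by (rule measurable_completion) simp

lemma const_leb_meas[measurable]: "(\<lambda>x::'a::euclidean_space. c::real) \<in> borel_measurable lebesgue"
  by simp

lemma div_anti: "0 \<le> (v::real) \<Longrightarrow> 0 < d1 \<Longrightarrow> d1 \<le> d2 \<Longrightarrow> v / d2 \<le> v / d1"
  by (simp add: divide_left_mono)

lemma ball_sets: "ball x \<rho> \<inter> space lebesgue \<in> sets lebesgue"
  by simp

lemma compl_ball_sets: "(UNIV - ball x \<rho>) \<inter> space lebesgue \<in> sets lebesgue"
  by simp

lemma ball_r1_fwd:
  fixes v :: "'a::euclidean_space \<Rightarrow> real" and x :: 'a
  assumes vm: "v \<in> borel_measurable lebesgue" and v0: "\<forall>y. 0 \<le> v y" and rho: "\<rho> > 0"
    and p: "p > 0" and e1: "e1 = a0 - p / real DIM('a)"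
    and kap: "\<kappa> = unit_ball_vol (real DIM('a)) powr (1 / real DIM('a))"
    and k: "k = ((\<kappa> + 1) / \<kappa>) powr p + (\<kappa> + 1) powr p"
    and H: "ereal (measure lebesgue (ball x \<rho>) powr a0) *
      esssup lebesgue (\<lambda>y. ereal (v y / (measure lebesgue (ball x \<rho>) powr (1 / real DIM('a)) + norm (x - y)) powr p))
      \<le> ereal (C * W / measure lebesgue (ball x \<rho>))"
  shows "ereal (measure lebesgue (ball x \<rho>) powr e1) *
      esssup (restrict_space lebesgue (ball x \<rho>)) (\<lambda>y. ereal (v y))
      \<le> ereal (k * C * W / measure lebesgue (ball x \<rho>))"
   and "ereal (measure lebesgue (ball x \<rho>) powr a0) *
      esssup (restrict_space lebesgue (UNIV - ball x \<rho>)) (\<lambda>y. ereal (v y / norm (x - y) powr p))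
      \<le> ereal (k * C * W / measure lebesgue (ball x \<rho>))"
proof -
  define M where "M = measure lebesgue (ball x \<rho>)"
  define K where "K = M powr (1 / real DIM('a))"
  define T where "T = C * W / M"
  define A0 where "A0 = M powr a0"
  define A1 where "A1 = M powr e1"
  have kpos: "\<kappa> > 0" using kap kappa_pos by simp
  have M0: "M > 0" using ball_measure[OF rho, of x] rho unfolding M_def by simp
  have KK: "K = \<kappa> * \<rho>" unfolding K_def M_def kap using ball_measure_root[OF rho] by simp
  have A0: "A0 > 0" "A1 > 0" using M0 unfolding A0_def A1_def by auto
  have A01: "A1 * K powr p = A0"
    using M0 unfolding A0_def A1_def K_def e1 by (simp add: powr_powr powr_add[symmetric])
  have gm: "(\<lambda>y. ereal (v y / (K + norm (x - y)) powr p)) \<in> borel_measurable lebesgue"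
    using vm by measurable
  have "AE y in lebesgue. v y / (K + norm (x - y)) powr p \<le> T / A0"
    using H A0 unfolding M_def[symmetric] K_def[symmetric] T_def[symmetric] A0_def[symmetric]
    by (simp add: ereal_mult_le_iff esssup_le_iff[OF gm])
  note AEH = this
  have "AE y in lebesgue. y \<in> ball x \<rho> \<longrightarrow> 0 \<le> T / A0"
    using AEH by eventually_elim (use v0 in \<open>auto intro: order_trans[rotated]\<close>)
  then have T0: "0 \<le> T / A0" using AE_ball_nontriv[OF rho] by blast
  have lam: "((\<kappa> + 1) / \<kappa>) powr p \<le> k" "(\<kappa> + 1) powr p \<le> k" using k by auto
  show "ereal (measure lebesgue (ball x \<rho>) powr e1) *
      esssup (restrict_space lebesgue (ball x \<rho>)) (\<lambda>y. ereal (v y))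
      \<le> ereal (k * C * W / measure lebesgue (ball x \<rho>))"
  proof -
    have "AE y in lebesgue. y \<in> ball x \<rho> \<longrightarrow> v y \<le> k * T / A1"
      using AEH
    proof eventually_elim
      case (elim y)
      show ?case
      proof
        assume yB: "y \<in> ball x \<rho>"
        define D where "D = (K + norm (x - y)) powr p"
        have Dp: "D > 0" unfolding D_def KK
          using add_pos_nonneg[OF mult_pos_pos[OF kpos rho] norm_ge_zero[of "x-y"]] by simp
        have "D \<le> ((\<kappa> + 1) * \<rho>) powr p" unfolding D_def KK
          using yB kpos rho p by (intro powr_mono2) (auto simp: dist_norm algebra_simps)
        also have "\<dots> = ((\<kappa> + 1) / \<kappa>) powr p * K powr p" unfolding KK
          using kpos rho by (simp add: powr_mult[symmetric])
        finally have Dle: "D \<le> ((\<kappa> + 1) / \<kappa>) powr p * K powr p" .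
        have "v y = (v y / D) * D" using Dp by simp
        also have "\<dots> \<le> (T / A0) * (((\<kappa> + 1) / \<kappa>) powr p * K powr p)"
          using elim Dle Dp v0 T0 unfolding D_def[symmetric]
          by (intro mult_mono) auto
        also have "\<dots> = ((\<kappa> + 1) / \<kappa>) powr p * T / A1"
          using A01 A0 by (auto simp: field_simps)
        also have "\<dots> \<le> k * T / A1"
          using lam T0 A0 by (intro divide_right_mono mult_right_mono) (auto simp: zero_le_divide_iff)
        finally show "v y \<le> k * T / A1" .
      qed
    qed
    then show ?thesis
      unfolding M_def[symmetric] A1_def[symmetric]
      using A0 vm
      by (simp add: ereal_mult_le_iff esssup_le_iff measurable_restrict_space1 AE_restrict_space_iff T_def mult.assoc)
  qed
  show "ereal (measure lebesgue (ball x \<rho>) powr a0) *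
      esssup (restrict_space lebesgue (UNIV - ball x \<rho>)) (\<lambda>y. ereal (v y / norm (x - y) powr p))
      \<le> ereal (k * C * W / measure lebesgue (ball x \<rho>))"
  proof -
    have "AE y in lebesgue. y \<in> UNIV - ball x \<rho> \<longrightarrow> v y / norm (x - y) powr p \<le> k * T / A0"
      using AEH
    proof eventually_elim
      case (elim y)
      show ?case
      proof
        assume yB: "y \<in> UNIV - ball x \<rho>"
        then have ny: "norm (x - y) \<ge> \<rho>" by (auto simp: dist_norm)
        have np: "norm (x - y) > 0" using ny rho by linarith
        have "(K + norm (x - y)) powr p \<le> ((\<kappa> + 1) * norm (x - y)) powr p"
          unfolding KK using kpos rho p ny by (intro powr_mono2) (auto simp: algebra_simps)
        also have "\<dots> = (\<kappa> + 1) powr p * norm (x - y) powr p"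
          using kpos np by (simp add: powr_mult)
        finally have Dle: "(K + norm (x - y)) powr p \<le> (\<kappa> + 1) powr p * norm (x - y) powr p" .
        have Dp: "(K + norm (x - y)) powr p > 0" unfolding KK
          using add_pos_nonneg[OF mult_pos_pos[OF kpos rho] norm_ge_zero[of "x-y"]] by simp
        have "v y / norm (x - y) powr p = (\<kappa> + 1) powr p * v y / ((\<kappa> + 1) powr p * norm (x - y) powr p)"
          using kpos by simp
        also have "\<dots> \<le> (\<kappa> + 1) powr p * v y / (K + norm (x - y)) powr p"
          using Dle Dp v0 kpos by (intro div_anti) auto
        also have "\<dots> = (\<kappa> + 1) powr p * (v y / (K + norm (x - y)) powr p)" by simp
        also have "\<dots> \<le> (\<kappa> + 1) powr p * (T / A0)"
          using elim kpos by (intro mult_left_mono) auto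
        also have "\<dots> \<le> k * (T / A0)"
          using lam T0 by (intro mult_right_mono) auto
        finally show "v y / norm (x - y) powr p \<le> k * T / A0" by simp
      qed
    qed
    moreover have "(\<lambda>y. ereal (v y / norm (x - y) powr p)) \<in> borel_measurable lebesgue"
      using vm by measurable
    ultimately show ?thesis
      unfolding M_def[symmetric] A0_def[symmetric]
      using A0 vm
      by (simp add: ereal_mult_le_iff esssup_le_iff measurable_restrict_space1 AE_restrict_space_iff T_def mult.assoc)
  qed
qed

lemma ball_r1_bwd:
  fixes v :: "'a::euclidean_space \<Rightarrow> real" and x :: 'a
  assumes vm: "v \<in> borel_measurable lebesgue" and v0: "\<forall>y. 0 \<le> v y" and rho: "\<rho> > 0"
    and p: "p > 0" and e1: "e1 = a0 - p / real DIM('a)"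
    and L: "ereal (measure lebesgue (ball x \<rho>) powr e1) *
      esssup (restrict_space lebesgue (ball x \<rho>)) (\<lambda>y. ereal (v y))
      \<le> ereal (C * W / measure lebesgue (ball x \<rho>))"
    and G: "ereal (measure lebesgue (ball x \<rho>) powr a0) *
      esssup (restrict_space lebesgue (UNIV - ball x \<rho>)) (\<lambda>y. ereal (v y / norm (x - y) powr p))
      \<le> ereal (C * W / measure lebesgue (ball x \<rho>))"
  shows "ereal (measure lebesgue (ball x \<rho>) powr a0) *
      esssup lebesgue (\<lambda>y. ereal (v y / (measure lebesgue (ball x \<rho>) powr (1 / real DIM('a)) + norm (x - y)) powr p))
      \<le> ereal (C * W / measure lebesgue (ball x \<rho>))"
proof -
  define \<kappa> where "\<kappa> = unit_ball_vol (real DIM('a)) powr (1 / real DIM('a))"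
  define M where "M = measure lebesgue (ball x \<rho>)"
  define K where "K = M powr (1 / real DIM('a))"
  define T where "T = C * W / M"
  define A0 where "A0 = M powr a0"
  define A1 where "A1 = M powr e1"
  have kpos: "\<kappa> > 0" using kappa_pos unfolding \<kappa>_def by simp
  have M0: "M > 0" using ball_measure[OF rho, of x] rho unfolding M_def by simp
  have KK: "K = \<kappa> * \<rho>" unfolding K_def M_def \<kappa>_def using ball_measure_root[OF rho] by simp
  have Kp: "K > 0" using KK kpos rho by simp
  have A0: "A0 > 0" "A1 > 0" using M0 unfolding A0_def A1_def by auto
  have A01: "A1 * K powr p = A0"
    using M0 unfolding A0_def A1_def K_def e1 by (simp add: powr_powr powr_add[symmetric])
  have gm: "(\<lambda>y. ereal (v y / (K + norm (x - y)) powr p)) \<in> borel_measurable lebesgue"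
    using vm by measurable
  have hm: "(\<lambda>y. ereal (v y / norm (x - y) powr p)) \<in> borel_measurable lebesgue"
    using vm by measurable
  have AL: "AE y in lebesgue. y \<in> ball x \<rho> \<longrightarrow> v y \<le> T / A1"
    using L A0 vm unfolding M_def[symmetric] A1_def[symmetric] T_def[symmetric]
    by (simp add: ereal_mult_le_iff esssup_le_iff measurable_restrict_space1 AE_restrict_space_iff)
  have AG: "AE y in lebesgue. y \<in> UNIV - ball x \<rho> \<longrightarrow> v y / norm (x - y) powr p \<le> T / A0"
    using G A0 hm unfolding M_def[symmetric] A0_def[symmetric] T_def[symmetric]
    by (simp add: ereal_mult_le_iff esssup_le_iff measurable_restrict_space1 AE_restrict_space_iff)
  have "AE y in lebesgue. v y / (K + norm (x - y)) powr p \<le> T / A0"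
    using AL AG
  proof eventually_elim
    case (elim y)
    show ?case
    proof (cases "y \<in> ball x \<rho>")
      case True
      have "v y / (K + norm (x - y)) powr p \<le> v y / K powr p"
        using v0 Kp p by (intro div_anti powr_mono2) auto
      also have "\<dots> \<le> (T / A1) / K powr p"
        using elim True Kp by (intro divide_right_mono) auto
      also have "\<dots> = T / A0" using A01[symmetric] by simp
      finally show ?thesis .
    next
      case False
      then have ny: "norm (x - y) \<ge> \<rho>" by (auto simp: dist_norm)
      have np: "norm (x - y) > 0" using ny rho by linarith
      have "v y / (K + norm (x - y)) powr p \<le> v y / norm (x - y) powr p"
        using v0 Kp p np by (intro div_anti powr_mono2) auto
      also have "\<dots> \<le> T / A0" using elim False by auto
      finally show ?thesis .
    qed
  qed
  then show ?thesis
    unfolding M_def[symmetric] A0_def[symmetric] K_def[symmetric]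
    using A0 by (simp add: ereal_mult_le_iff esssup_le_iff[OF gm] T_def)
qed



lemma ball_leb_sets[measurable]: "ball (x::'a::euclidean_space) \<rho> \<in> sets lebesgue"
  by simp

lemma ennreal_le_mult: "0 \<le> Q \<Longrightarrow> 0 \<le> b \<Longrightarrow> a \<le> Q * b \<Longrightarrow> ennreal a \<le> ennreal Q * ennreal b"
  by (simp add: ennreal_mult[symmetric] ennreal_leI)

lemma le_mult_div:
  fixes V D Q :: real
  assumes "0 \<le> V" "0 < D" "D \<le> Q"
  shows "V \<le> Q * (V / D)"
proof -
  have "V = (V / D) * D" using assms by simp
  also have "\<dots> \<le> (V / D) * Q" using assms by (intro mult_left_mono) auto
  also have "\<dots> = Q * (V / D)" by (rule mult.commute)
  finally show ?thesis .
qed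

lemma ball_gt1_ints:
  fixes v :: "'a::euclidean_space \<Rightarrow> real" and x :: 'a
  assumes vm: "v \<in> borel_measurable lebesgue" and v0: "\<forall>y. 0 \<le> v y" and rho: "\<rho> > 0"
    and p: "p > 0" and q: "q \<ge> 1"
    and kap: "\<kappa> = unit_ball_vol (real DIM('a)) powr (1 / real DIM('a))"
    and K: "K = measure lebesgue (ball x \<rho>) powr (1 / real DIM('a))"
    and F: "F = (\<integral>\<^sup>+ y. ennreal (v y powr q / (K + norm (x - y)) powr (q * p)) \<partial>lebesgue)"
    and Lb: "Lb = (\<integral>\<^sup>+ y\<in>ball x \<rho>. ennreal (v y powr q) \<partial>lebesgue)"
    and Gc: "Gc = (\<integral>\<^sup>+ y\<in>(UNIV - ball x \<rho>). ennreal (v y powr q / norm (x - y) powr (q * p)) \<partial>lebesgue)"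
  shows "Lb \<le> ennreal (((\<kappa> + 1) * \<rho>) powr (q * p)) * F"
    and "Gc \<le> ennreal ((\<kappa> + 1) powr (q * p)) * F"
    and "F \<le> ennreal (K powr (- (q * p))) * Lb + Gc"
proof -
  have kpos: "\<kappa> > 0" using kap kappa_pos by simp
  have KK: "K = \<kappa> * \<rho>" unfolding K kap using ball_measure_root[OF rho] by simp
  have Kp: "K > 0" using KK kpos rho by simp
  have qp: "q * p > 0" using q p by simp
  have Dp: "(K + norm (x - y)) powr (q * p) > 0" for y
    using add_pos_nonneg[OF Kp norm_ge_zero[of "x-y"]] by simp
  have fm: "(\<lambda>y. ennreal (v y powr q / (K + norm (x - y)) powr (q * p))) \<in> borel_measurable lebesgue"
    using vm by measurable
  have vqm: "(\<lambda>y. ennreal (v y powr q) * indicator (ball x \<rho>) y) \<in> borel_measurable lebesgue"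
    using vm by measurable
  have hm: "(\<lambda>y. ennreal (v y powr q / norm (x - y) powr (q * p)) * indicator (UNIV - ball x \<rho>) y) \<in> borel_measurable lebesgue"
    using vm by measurable
  show "Lb \<le> ennreal (((\<kappa> + 1) * \<rho>) powr (q * p)) * F"
  proof -
    have "Lb \<le> (\<integral>\<^sup>+ y. ennreal (((\<kappa> + 1) * \<rho>) powr (q * p)) * ennreal (v y powr q / (K + norm (x - y)) powr (q * p)) \<partial>lebesgue)"
      unfolding Lb
    proof (intro nn_integral_mono)
      fix y
      show "ennreal (v y powr q) * indicator (ball x \<rho>) y \<le> ennreal (((\<kappa> + 1) * \<rho>) powr (q * p)) * ennreal (v y powr q / (K + norm (x - y)) powr (q * p))"
      proof (cases "y \<in> ball x \<rho>")
        case True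
        define D where "D = (K + norm (x - y)) powr (q * p)"
        have D0: "D > 0" using Dp unfolding D_def by simp
        have "D \<le> ((\<kappa> + 1) * \<rho>) powr (q * p)" unfolding D_def KK
          using True kpos rho qp by (intro powr_mono2) (auto simp: dist_norm algebra_simps)
        then have "v y powr q \<le> ((\<kappa> + 1) * \<rho>) powr (q * p) * (v y powr q / D)"
          using D0 by (intro le_mult_div) auto
        then show ?thesis using True D0 unfolding D_def[symmetric]
          by (simp add: ennreal_le_mult)
      qed simp
    qed
    also have "\<dots> = ennreal (((\<kappa> + 1) * \<rho>) powr (q * p)) * F"
      unfolding F by (rule nn_integral_cmult[OF fm])
    finally show ?thesis .
  qed
  show "Gc \<le> ennreal ((\<kappa> + 1) powr (q * p)) * F"
  proof -
    have "Gc \<le> (\<integral>\<^sup>+ y. ennreal ((\<kappa> + 1) powr (q * p)) * ennreal (v y powr q / (K + norm (x - y)) powr (q * p)) \<partial>lebesgue)"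
      unfolding Gc
    proof (intro nn_integral_mono)
      fix y
      show "ennreal (v y powr q / norm (x - y) powr (q * p)) * indicator (UNIV - ball x \<rho>) y \<le> ennreal ((\<kappa> + 1) powr (q * p)) * ennreal (v y powr q / (K + norm (x - y)) powr (q * p))"
      proof (cases "y \<in> ball x \<rho>")
        case False
        then have ny: "norm (x - y) \<ge> \<rho>" by (auto simp: dist_norm)
        have np: "norm (x - y) > 0" using ny rho by linarith
        have "(K + norm (x - y)) powr (q * p) \<le> ((\<kappa> + 1) * norm (x - y)) powr (q * p)"
          unfolding KK using kpos rho qp ny by (intro powr_mono2) (auto simp: algebra_simps)
        also have "\<dots> = (\<kappa> + 1) powr (q * p) * norm (x - y) powr (q * p)"
          using kpos np by (simp add: powr_mult)
        finally have Dle: "(K + norm (x - y)) powr (q * p) \<le> (\<kappa> + 1) powr (q * p) * norm (x - y) powr (q * p)" .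
        have "v y powr q / norm (x - y) powr (q * p) = (\<kappa> + 1) powr (q * p) * v y powr q / ((\<kappa> + 1) powr (q * p) * norm (x - y) powr (q * p))"
          using kpos by simp
        also have "\<dots> \<le> (\<kappa> + 1) powr (q * p) * v y powr q / (K + norm (x - y)) powr (q * p)"
          using Dle Dp kpos by (intro div_anti) auto
        also have "\<dots> = (\<kappa> + 1) powr (q * p) * (v y powr q / (K + norm (x - y)) powr (q * p))" by simp
        finally show ?thesis using False by (simp add: ennreal_le_mult)
      qed simp
    qed
    also have "\<dots> = ennreal ((\<kappa> + 1) powr (q * p)) * F"
      unfolding F by (rule nn_integral_cmult[OF fm])
    finally show ?thesis .
  qed
  show "F \<le> ennreal (K powr (- (q * p))) * Lb + Gc"
  proof -
    have "F \<le> (\<integral>\<^sup>+ y. ennreal (K powr (- (q * p))) * (ennreal (v y powr q) * indicator (ball x \<rho>) y) +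
        ennreal (v y powr q / norm (x - y) powr (q * p)) * indicator (UNIV - ball x \<rho>) y \<partial>lebesgue)"
      unfolding F
    proof (intro nn_integral_mono)
      fix y
      show "ennreal (v y powr q / (K + norm (x - y)) powr (q * p)) \<le> ennreal (K powr (- (q * p))) * (ennreal (v y powr q) * indicator (ball x \<rho>) y) +
        ennreal (v y powr q / norm (x - y) powr (q * p)) * indicator (UNIV - ball x \<rho>) y"
      proof (cases "y \<in> ball x \<rho>")
        case True
        have "v y powr q / (K + norm (x - y)) powr (q * p) \<le> v y powr q / K powr (q * p)"
          using Kp qp by (intro div_anti powr_mono2) auto
        also have "\<dots> = K powr (- (q * p)) * v y powr q" by (simp add: powr_minus divide_inverse)
        finally show ?thesis using True by (simp add: ennreal_le_mult)
      next
        case False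
        then have ny: "norm (x - y) \<ge> \<rho>" by (auto simp: dist_norm)
        have np: "norm (x - y) > 0" using ny rho by linarith
        have "v y powr q / (K + norm (x - y)) powr (q * p) \<le> v y powr q / norm (x - y) powr (q * p)"
          using Kp qp np by (intro div_anti powr_mono2) auto
        then show ?thesis using False by (simp add: ennreal_leI)
      qed
    qed
    also have "\<dots> = ennreal (K powr (- (q * p))) * Lb + Gc"
      unfolding Lb Gc
    proof (subst nn_integral_add)
      show "(\<lambda>y. ennreal (K powr (- (q * p))) * (ennreal (v y powr q) * indicator (ball x \<rho>) y)) \<in> borel_measurable lebesgue"
        using vqm by (rule borel_measurable_times_ennreal[OF borel_measurable_const])
      show "(\<lambda>y. ennreal (v y powr q / norm (x - y) powr (q * p)) * indicator (UNIV - ball x \<rho>) y) \<in> borel_measurable lebesgue"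
        by (rule hm)
    qed (rule arg_cong2[where f="(+)", OF nn_integral_cmult[OF vqm] refl])
    finally show ?thesis .
  qed
qed



lemma ball_gt1_fwd:
  fixes v :: "'a::euclidean_space \<Rightarrow> real" and x :: 'a
  assumes vm: "v \<in> borel_measurable lebesgue" and v0: "\<forall>y. 0 \<le> v y" and rho: "\<rho> > 0"
    and p: "p > 0" and q: "q \<ge> 1" and e1: "e1 - 1 / q = a0 - p / real DIM('a)"
    and kap: "\<kappa> = unit_ball_vol (real DIM('a)) powr (1 / real DIM('a))"
    and k: "k = ((\<kappa> + 1) / \<kappa>) powr p + (\<kappa> + 1) powr p"
    and H: "ereal (measure lebesgue (ball x \<rho>) powr a0) *
      root_ereal q (\<integral>\<^sup>+ y. ennreal (v y powr q / (measure lebesgue (ball x \<rho>) powr (1 / real DIM('a)) + norm (x - y)) powr (q * p)) \<partial>lebesgue)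
      \<le> ereal (C * W / measure lebesgue (ball x \<rho>))"
  shows "ereal (measure lebesgue (ball x \<rho>) powr e1) *
      root_ereal q (ennreal (1 / measure lebesgue (ball x \<rho>)) * (\<integral>\<^sup>+ y\<in>ball x \<rho>. ennreal (v y powr q) \<partial>lebesgue))
      \<le> ereal (k * C * W / measure lebesgue (ball x \<rho>))"
   and "ereal (measure lebesgue (ball x \<rho>) powr a0) *
      root_ereal q (\<integral>\<^sup>+ y\<in>(UNIV - ball x \<rho>). ennreal (v y powr q / norm (x - y) powr (q * p)) \<partial>lebesgue)
      \<le> ereal (k * C * W / measure lebesgue (ball x \<rho>))"
proof -
  define M where "M = measure lebesgue (ball x \<rho>)"
  define K where "K = M powr (1 / real DIM('a))"
  define T where "T = C * W / M"
  define A0 where "A0 = M powr a0"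
  define A1 where "A1 = M powr e1"
  define s where "s = 1 / q"
  define F where "F = (\<integral>\<^sup>+ y. ennreal (v y powr q / (K + norm (x - y)) powr (q * p)) \<partial>lebesgue)"
  define Lb where "Lb = (\<integral>\<^sup>+ y\<in>ball x \<rho>. ennreal (v y powr q) \<partial>lebesgue)"
  define Gc where "Gc = (\<integral>\<^sup>+ y\<in>(UNIV - ball x \<rho>). ennreal (v y powr q / norm (x - y) powr (q * p)) \<partial>lebesgue)"
  define Q where "Q = ((\<kappa> + 1) * \<rho>) powr (q * p)"
  define Q2 where "Q2 = (\<kappa> + 1) powr (q * p)"
  note ints = ball_gt1_ints[OF vm v0 rho p q kap K_def[unfolded M_def] F_def Lb_def Gc_def]
  have kpos: "\<kappa> > 0" using kap kappa_pos by simp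
  have M0: "M > 0" using ball_measure[OF rho, of x] rho unfolding M_def by simp
  have KK: "K = \<kappa> * \<rho>" unfolding K_def M_def kap using ball_measure_root[OF rho] by simp
  have A0: "A0 > 0" "A1 > 0" using M0 unfolding A0_def A1_def by auto
  have s: "s > 0" "s \<le> 1" "q * s = 1" using q unfolding s_def by auto
  have HH: "F \<noteq> \<infinity> \<and> A0 * enn2real F powr s \<le> T"
    using H unfolding M_def[symmetric] K_def[symmetric] A0_def[symmetric] T_def[symmetric]
      F_def[symmetric] s_def root_le_iff[OF A0(1)] .
  have T0: "0 \<le> T" using HH A0 by (meson order_trans zero_le_mult_iff less_imp_le powr_ge_zero)
  have lam: "((\<kappa> + 1) / \<kappa>) powr p \<le> k" "(\<kappa> + 1) powr p \<le> k" using k by auto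
  have Fi: "F < top" using HH by (simp add: less_top)
  have Q0: "Q \<ge> 0" "Q2 \<ge> 0" unfolding Q_def Q2_def by auto
  have a0: "enn2real F \<ge> 0" by simp
  have qps: "q * p * s = p"
  proof -
    have "q * p * s = p * (q * s)" by (simp add: ac_simps)
    then show ?thesis using s by simp
  qed
  have Qs: "Q powr s = ((\<kappa> + 1) / \<kappa>) powr p * M powr (p / real DIM('a))"
  proof -
    have "Q powr s = ((\<kappa> + 1) * \<rho>) powr p" unfolding Q_def by (simp only: powr_powr qps)
    also have "\<dots> = ((\<kappa> + 1) / \<kappa>) powr p * K powr p" unfolding KK
      using kpos rho by (simp add: powr_mult[symmetric])
    also have "K powr p = M powr (p / real DIM('a))" unfolding K_def by (simp add: powr_powr)
    finally show ?thesis .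
  qed
  have Q2s: "Q2 powr s = (\<kappa> + 1) powr p" unfolding Q2_def by (simp only: powr_powr qps)
  have E: "A1 * (1 / M) powr s * M powr (p / real DIM('a)) = A0"
  proof -
    have "A1 * (1 / M) powr s * M powr (p / real DIM('a)) = M powr (e1 - s + p / real DIM('a))"
      unfolding A1_def using M0 by (simp add: powr_add powr_diff powr_divide)
    also have "e1 - s + p / real DIM('a) = a0" using e1 unfolding s_def by simp
    finally show ?thesis unfolding A0_def .
  qed
  show "ereal (measure lebesgue (ball x \<rho>) powr e1) *
      root_ereal q (ennreal (1 / measure lebesgue (ball x \<rho>)) * (\<integral>\<^sup>+ y\<in>ball x \<rho>. ennreal (v y powr q) \<partial>lebesgue))
      \<le> ereal (k * C * W / measure lebesgue (ball x \<rho>))"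
  proof -
    have fa: "Lb \<le> ennreal Q * F" using ints(1) unfolding Q_def .
    have Lfin: "Lb < top" using fa Fi by (metis ennreal_mult_less_top ennreal_less_top order.strict_trans1)
    have b: "enn2real Lb \<le> Q * enn2real F"
      using enn2real_mono[OF fa] Fi Q0 by (simp add: enn2real_mult ennreal_mult_less_top)
    have eq: "enn2real (ennreal (1 / M) * Lb) = (1 / M) * enn2real Lb"
      using M0 by (simp add: enn2real_mult)
    have "A1 * ((1 / M) * enn2real Lb) powr s \<le> A1 * ((1 / M) * (Q * enn2real F)) powr s"
      using b M0 A0 s by (intro mult_left_mono powr_mono2 mult_left_mono) auto
    also have "\<dots> = (A1 * (1 / M) powr s * Q powr s) * enn2real F powr s"
    proof -
      have "((1 / M) * (Q * enn2real F)) powr s = (1 / M) powr s * (Q * enn2real F) powr s"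
        by (rule powr_mult; use M0 Q0 in simp)
      also have "(Q * enn2real F) powr s = Q powr s * enn2real F powr s"
        by (rule powr_mult; use Q0 in simp)
      finally show ?thesis by (simp add: ac_simps)
    qed
    also have "A1 * (1 / M) powr s * Q powr s = ((\<kappa> + 1) / \<kappa>) powr p * A0"
      unfolding Qs using E by (simp add: ac_simps)
    also have "((\<kappa> + 1) / \<kappa>) powr p * A0 * enn2real F powr s = ((\<kappa> + 1) / \<kappa>) powr p * (A0 * enn2real F powr s)"
      by simp
    also have "\<dots> \<le> ((\<kappa> + 1) / \<kappa>) powr p * T" using HH by (intro mult_left_mono) auto
    also have "\<dots> \<le> k * T" using lam T0 by (intro mult_right_mono) auto
    finally have main: "A1 * ((1 / M) * enn2real Lb) powr s \<le> k * T" .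
    have fin: "ennreal (1 / M) * Lb \<noteq> \<infinity>" using Lfin by (simp add: ennreal_mult_eq_top_iff less_top)
    show ?thesis
      unfolding M_def[symmetric] A1_def[symmetric] Lb_def[symmetric] root_le_iff[OF A0(2)]
      using fin main eq unfolding s_def T_def by (simp add: mult.assoc)
  qed
  show "ereal (measure lebesgue (ball x \<rho>) powr a0) *
      root_ereal q (\<integral>\<^sup>+ y\<in>(UNIV - ball x \<rho>). ennreal (v y powr q / norm (x - y) powr (q * p)) \<partial>lebesgue)
      \<le> ereal (k * C * W / measure lebesgue (ball x \<rho>))"
  proof -
    have fb: "Gc \<le> ennreal Q2 * F" using ints(2) unfolding Q2_def .
    have Gfin: "Gc < top" using fb Fi by (metis ennreal_mult_less_top ennreal_less_top order.strict_trans1)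
    have c: "enn2real Gc \<le> Q2 * enn2real F"
      using enn2real_mono[OF fb] Fi Q0 by (simp add: enn2real_mult ennreal_mult_less_top)
    have "A0 * enn2real Gc powr s \<le> A0 * (Q2 * enn2real F) powr s"
      using c A0 s by (intro mult_left_mono powr_mono2) auto
    also have "\<dots> = Q2 powr s * (A0 * enn2real F powr s)"
      using Q0 by (simp add: powr_mult)
    also have "\<dots> \<le> (\<kappa> + 1) powr p * T" unfolding Q2s using HH by (intro mult_left_mono) auto
    also have "\<dots> \<le> k * T" using lam T0 by (intro mult_right_mono) auto
    finally have main: "A0 * enn2real Gc powr s \<le> k * T" .
    show ?thesis
      unfolding M_def[symmetric] A0_def[symmetric] Gc_def[symmetric] root_le_iff[OF A0(1)]
      using Gfin main unfolding s_def T_def by (simp add: mult.assoc less_top)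
  qed
qed



lemma ball_gt1_bwd:
  fixes v :: "'a::euclidean_space \<Rightarrow> real" and x :: 'a
  assumes vm: "v \<in> borel_measurable lebesgue" and v0: "\<forall>y. 0 \<le> v y" and rho: "\<rho> > 0"
    and p: "p > 0" and q: "q \<ge> 1" and e1: "e1 - 1 / q = a0 - p / real DIM('a)"
    and L: "ereal (measure lebesgue (ball x \<rho>) powr e1) *
      root_ereal q (ennreal (1 / measure lebesgue (ball x \<rho>)) * (\<integral>\<^sup>+ y\<in>ball x \<rho>. ennreal (v y powr q) \<partial>lebesgue))
      \<le> ereal (C * W / measure lebesgue (ball x \<rho>))"
    and G: "ereal (measure lebesgue (ball x \<rho>) powr a0) *
      root_ereal q (\<integral>\<^sup>+ y\<in>(UNIV - ball x \<rho>). ennreal (v y powr q / norm (x - y) powr (q * p)) \<partial>lebesgue)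
      \<le> ereal (C * W / measure lebesgue (ball x \<rho>))"
  shows "ereal (measure lebesgue (ball x \<rho>) powr a0) *
      root_ereal q (\<integral>\<^sup>+ y. ennreal (v y powr q / (measure lebesgue (ball x \<rho>) powr (1 / real DIM('a)) + norm (x - y)) powr (q * p)) \<partial>lebesgue)
      \<le> ereal (2 * C * W / measure lebesgue (ball x \<rho>))"
proof -
  define \<kappa> where "\<kappa> = unit_ball_vol (real DIM('a)) powr (1 / real DIM('a))"
  define M where "M = measure lebesgue (ball x \<rho>)"
  define K where "K = M powr (1 / real DIM('a))"
  define T where "T = C * W / M"
  define A0 where "A0 = M powr a0"
  define A1 where "A1 = M powr e1"
  define s where "s = 1 / q"
  define F where "F = (\<integral>\<^sup>+ y. ennreal (v y powr q / (K + norm (x - y)) powr (q * p)) \<partial>lebesgue)"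
  define Lb where "Lb = (\<integral>\<^sup>+ y\<in>ball x \<rho>. ennreal (v y powr q) \<partial>lebesgue)"
  define Gc where "Gc = (\<integral>\<^sup>+ y\<in>(UNIV - ball x \<rho>). ennreal (v y powr q / norm (x - y) powr (q * p)) \<partial>lebesgue)"
  define P where "P = K powr (- (q * p))"
  note ints = ball_gt1_ints[OF vm v0 rho p q \<kappa>_def K_def[unfolded M_def] F_def Lb_def Gc_def]
  have M0: "M > 0" using ball_measure[OF rho, of x] rho unfolding M_def by simp
  have A0: "A0 > 0" "A1 > 0" using M0 unfolding A0_def A1_def by auto
  have s: "s > 0" "s \<le> 1" "q * s = 1" using q unfolding s_def by auto
  have qps: "q * p * s = p"
  proof -
    have "q * p * s = p * (q * s)" by (simp add: ac_simps)
    then show ?thesis using s by simp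
  qed
  have LL: "ennreal (1 / M) * Lb \<noteq> \<infinity> \<and> A1 * enn2real (ennreal (1 / M) * Lb) powr s \<le> T"
    using L unfolding M_def[symmetric] A1_def[symmetric] T_def[symmetric]
      Lb_def[symmetric] s_def root_le_iff[OF A0(2)] .
  have GG: "Gc \<noteq> \<infinity> \<and> A0 * enn2real Gc powr s \<le> T"
    using G unfolding M_def[symmetric] A0_def[symmetric] T_def[symmetric]
      Gc_def[symmetric] s_def root_le_iff[OF A0(1)] .
  have Lfin: "Lb < top" using LL M0 by (simp add: ennreal_mult_eq_top_iff less_top)
  have Gfin: "Gc < top" using GG by (simp add: less_top)
  have P0: "P \<ge> 0" unfolding P_def by simp
  have fc: "F \<le> ennreal P * Lb + Gc" using ints(3) unfolding P_def .
  have PLfin: "ennreal P * Lb < top" using Lfin by (simp add: ennreal_mult_less_top)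
  have Ffin: "F < top" using fc PLfin Gfin by (metis order.strict_trans1 ennreal_add_less_top)
  have a: "enn2real F \<le> P * enn2real Lb + enn2real Gc"
    using enn2real_mono[OF fc] PLfin Gfin P0 by (simp add: enn2real_plus enn2real_mult ennreal_add_less_top)
  have eqL: "enn2real (ennreal (1 / M) * Lb) = (1 / M) * enn2real Lb"
    using M0 by (simp add: enn2real_mult)
  have Ps: "P powr s = M powr (- p / real DIM('a))"
  proof -
    have ex: "- (q * p) * s = - p" using qps by (simp only: mult_minus_left)
    have "P powr s = K powr (- (q * p) * s)" unfolding P_def by (rule powr_powr)
    also have "\<dots> = K powr (- p)" by (simp only: ex)
    also have "\<dots> = M powr (1 / real DIM('a) * - p)" unfolding K_def by (rule powr_powr)
    also have "\<dots> = M powr (- p / real DIM('a))" by simp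
    finally show ?thesis .
  qed
  have E: "A0 * M powr (- p / real DIM('a)) = A1 * (1 / M) powr s"
  proof -
    have "A0 * M powr (- p / real DIM('a)) = M powr (a0 + - p / real DIM('a))"
      unfolding A0_def by (rule powr_add[symmetric])
    also have "\<dots> = M powr (e1 - s)" using e1 unfolding s_def by simp
    also have "\<dots> = M powr e1 / M powr s" by (rule powr_diff)
    also have "1 / M powr s = (1 / M) powr s" using M0 by (simp add: powr_divide)
    then have "M powr e1 / M powr s = A1 * (1 / M) powr s" unfolding A1_def
      by (metis times_divide_eq_right mult_1_right)
    finally show ?thesis .
  qed
  have "A0 * enn2real F powr s \<le> A0 * (P * enn2real Lb + enn2real Gc) powr s"
    using a A0 s by (intro mult_left_mono powr_mono2) auto
  also have "\<dots> \<le> A0 * ((P * enn2real Lb) powr s + enn2real Gc powr s)"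
    using A0 s P0 by (intro mult_left_mono powr_subadd) auto
  also have "(P * enn2real Lb) powr s = P powr s * enn2real Lb powr s"
    by (rule powr_mult; use P0 in simp)
  also have "A0 * (P powr s * enn2real Lb powr s + enn2real Gc powr s) =
      A1 * ((1 / M) powr s * enn2real Lb powr s) + A0 * enn2real Gc powr s"
    unfolding Ps using E by (simp add: algebra_simps)
  also have "(1 / M) powr s * enn2real Lb powr s = ((1 / M) * enn2real Lb) powr s"
    by (rule powr_mult[symmetric]; use M0 in simp)
  also have "A1 * ((1 / M) * enn2real Lb) powr s + A0 * enn2real Gc powr s \<le> T + T"
    using LL GG eqL by (intro add_mono) auto
  finally have main: "A0 * enn2real F powr s \<le> 2 * T" by simp
  show ?thesis
    unfolding M_def[symmetric] A0_def[symmetric] K_def[symmetric] F_def[symmetric] root_le_iff[OF A0(1)]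
    using Ffin main unfolding s_def T_def by (simp add: mult.assoc less_top)
qed



theorem lemma3p4:
  fixes w v :: "'a::euclidean_space \<Rightarrow> real"
    and \<alpha> \<eta> \<delta> \<alpha>t \<delta>t :: real and m :: nat and r :: ereal
  assumes "0 \<le> \<alpha>" "\<alpha> < real DIM('a)"
    and "0 < \<eta>" "\<eta> \<le> 1"
    and "0 < \<delta>" "\<delta> < \<eta>" "m > 0 \<longrightarrow> \<delta> < (real DIM('a) - \<alpha>) / real m"
    and "1 \<le> r"
    and "\<alpha>t = real m * \<delta> + \<alpha>" "\<delta>t \<le> \<delta>"
    and "weight w" "weight v"
  shows "inH r \<alpha>t \<delta>t \<delta> w v \<longleftrightarrow>
    (\<exists>C::real. \<forall>x::'a. \<forall>\<rho>>0.
        local_cond r \<alpha>t \<delta>t C w v x \<rho> \<and> global_cond r \<alpha>t \<delta>t \<delta> C w v x \<rho>)"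
proof -
  define N where "N = real DIM('a)"
  define p where "p = N - \<alpha>t + \<delta>"
  define q where "q = real_of_ereal (conj_exp r)"
  define a0 where "a0 = (\<delta> - \<delta>t) / N"
  define e1 where "e1 = (\<alpha>t - \<delta>t) / N - inv_exp r"
  define \<kappa> where "\<kappa> = unit_ball_vol (real DIM('a)) powr (1 / real DIM('a))"
  define k where "k = ((\<kappa> + 1) / \<kappa>) powr p + (\<kappa> + 1) powr p"
  have N0: "N > 0" unfolding N_def by simp
  have p0: "p > 0"
  proof (cases "m = 0")
    case True
    then show ?thesis using assms unfolding p_def N_def by simp
  next
    case False
    then have "\<delta> * real m < real DIM('a) - \<alpha>" using assms(7)
      by (simp add: pos_less_divide_eq)
    then show ?thesis using assms unfolding p_def N_def by (simp add: algebra_simps)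
  qed
  have vm: "v \<in> borel_measurable lebesgue" using weight_meas[OF assms(12)] .
  have v0: "\<forall>y. 0 \<le> v y" using assms(12) unfolding weight_def by simp
  have ex: "a0 - p / N = (\<alpha>t - \<delta>t) / N - 1"
    unfolding a0_def p_def using N0 by (simp add: field_simps)
  show ?thesis
  proof (cases "1 < r")
    case True
    have qe: "q \<ge> 1 \<and> e1 - 1 / q = a0 - p / N"
    proof (cases r)
      case (real R)
      then have R: "R > 1" using True by simp
      then have qR: "q = R / (R - 1)" unfolding q_def conj_exp_def using real by auto
      have iR: "inv_exp r = 1 / R" unfolding inv_exp_def using real by simp
      have q1: "1 \<le> q" unfolding qR using R by (simp add: le_divide_eq)
      have "1 / q = (R - 1) / R" unfolding qR by simp
      then have "inv_exp r + 1 / q = 1" unfolding iR using R by (simp add: add_divide_distrib[symmetric])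
      then show ?thesis using q1 unfolding e1_def ex by linarith
    next
      case PInf
      then show ?thesis unfolding q_def conj_exp_def e1_def ex inv_exp_def by simp
    next
      case MInf
      then show ?thesis using True by simp
    qed
    show ?thesis
      unfolding inH_def local_cond_def global_cond_def Let_def if_P[OF True]
        N_def[symmetric] q_def[symmetric] p_def[symmetric] a0_def[symmetric] e1_def[symmetric]
    proof
      assume "\<exists>C. \<forall>x. \<forall>\<rho>>0. ereal (measure lebesgue (ball x \<rho>) powr a0) *
        root_ereal q (\<integral>\<^sup>+ y. ennreal (v y powr q / (measure lebesgue (ball x \<rho>) powr (1 / N) + norm (x - y)) powr (q * p)) \<partial>lebesgue)
        \<le> ereal (C * set_lebesgue_integral lebesgue (ball x \<rho>) w / measure lebesgue (ball x \<rho>))"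
      then obtain C where H: "\<And>x \<rho>. \<rho> > 0 \<Longrightarrow> ereal (measure lebesgue (ball x \<rho>) powr a0) *
        root_ereal q (\<integral>\<^sup>+ y. ennreal (v y powr q / (measure lebesgue (ball x \<rho>) powr (1 / N) + norm (x - y)) powr (q * p)) \<partial>lebesgue)
        \<le> ereal (C * set_lebesgue_integral lebesgue (ball x \<rho>) w / measure lebesgue (ball x \<rho>))" by blast
      show "\<exists>C. \<forall>x. \<forall>\<rho>>0.
        ereal (measure lebesgue (ball x \<rho>) powr e1) *
          root_ereal q (ennreal (1 / measure lebesgue (ball x \<rho>)) * (\<integral>\<^sup>+ y\<in>ball x \<rho>. ennreal (v y powr q) \<partial>lebesgue))
          \<le> ereal (C * set_lebesgue_integral lebesgue (ball x \<rho>) w / measure lebesgue (ball x \<rho>)) \<and>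
        ereal (measure lebesgue (ball x \<rho>) powr a0) *
          root_ereal q (\<integral>\<^sup>+ y\<in>(UNIV - ball x \<rho>). ennreal (v y powr q / norm (x - y) powr (q * p)) \<partial>lebesgue)
          \<le> ereal (C * set_lebesgue_integral lebesgue (ball x \<rho>) w / measure lebesgue (ball x \<rho>))"
        using ball_gt1_fwd[OF vm v0 _ p0 _ _ \<kappa>_def k_def H[unfolded N_def]] qe unfolding N_def by blast
    next
      assume "\<exists>C. \<forall>x. \<forall>\<rho>>0.
        ereal (measure lebesgue (ball x \<rho>) powr e1) *
          root_ereal q (ennreal (1 / measure lebesgue (ball x \<rho>)) * (\<integral>\<^sup>+ y\<in>ball x \<rho>. ennreal (v y powr q) \<partial>lebesgue))
          \<le> ereal (C * set_lebesgue_integral lebesgue (ball x \<rho>) w / measure lebesgue (ball x \<rho>)) \<and>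
        ereal (measure lebesgue (ball x \<rho>) powr a0) *
          root_ereal q (\<integral>\<^sup>+ y\<in>(UNIV - ball x \<rho>). ennreal (v y powr q / norm (x - y) powr (q * p)) \<partial>lebesgue)
          \<le> ereal (C * set_lebesgue_integral lebesgue (ball x \<rho>) w / measure lebesgue (ball x \<rho>))"
      then obtain C where LG: "\<And>x \<rho>. \<rho> > 0 \<Longrightarrow>
        ereal (measure lebesgue (ball x \<rho>) powr e1) *
          root_ereal q (ennreal (1 / measure lebesgue (ball x \<rho>)) * (\<integral>\<^sup>+ y\<in>ball x \<rho>. ennreal (v y powr q) \<partial>lebesgue))
          \<le> ereal (C * set_lebesgue_integral lebesgue (ball x \<rho>) w / measure lebesgue (ball x \<rho>)) \<and>
        ereal (measure lebesgue (ball x \<rho>) powr a0) *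
          root_ereal q (\<integral>\<^sup>+ y\<in>(UNIV - ball x \<rho>). ennreal (v y powr q / norm (x - y) powr (q * p)) \<partial>lebesgue)
          \<le> ereal (C * set_lebesgue_integral lebesgue (ball x \<rho>) w / measure lebesgue (ball x \<rho>))" by blast
      show "\<exists>C. \<forall>x. \<forall>\<rho>>0. ereal (measure lebesgue (ball x \<rho>) powr a0) *
        root_ereal q (\<integral>\<^sup>+ y. ennreal (v y powr q / (measure lebesgue (ball x \<rho>) powr (1 / N) + norm (x - y)) powr (q * p)) \<partial>lebesgue)
        \<le> ereal (C * set_lebesgue_integral lebesgue (ball x \<rho>) w / measure lebesgue (ball x \<rho>))"
        using ball_gt1_bwd[OF vm v0 _ p0 _ _ conjunct1[OF LG] conjunct2[OF LG]] qe unfolding N_def by blast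
    qed
  next
    case False
    then have r1: "r = 1" using assms(8) by simp
    have e1e: "e1 = a0 - p / N" unfolding e1_def ex using r1 by (simp add: inv_exp_def)
    show ?thesis
      unfolding inH_def local_cond_def global_cond_def Let_def if_not_P[OF False]
        N_def[symmetric] p_def[symmetric] a0_def[symmetric] e1_def[symmetric]
    proof
      assume "\<exists>C. \<forall>x. \<forall>\<rho>>0. ereal (measure lebesgue (ball x \<rho>) powr a0) *
        esssup lebesgue (\<lambda>y. ereal (v y / (measure lebesgue (ball x \<rho>) powr (1 / N) + norm (x - y)) powr p))
        \<le> ereal (C * set_lebesgue_integral lebesgue (ball x \<rho>) w / measure lebesgue (ball x \<rho>))"
      then obtain C where H: "\<And>x \<rho>. \<rho> > 0 \<Longrightarrow> ereal (measure lebesgue (ball x \<rho>) powr a0) *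
        esssup lebesgue (\<lambda>y. ereal (v y / (measure lebesgue (ball x \<rho>) powr (1 / N) + norm (x - y)) powr p))
        \<le> ereal (C * set_lebesgue_integral lebesgue (ball x \<rho>) w / measure lebesgue (ball x \<rho>))" by blast
      show "\<exists>C. \<forall>x. \<forall>\<rho>>0.
        ereal (measure lebesgue (ball x \<rho>) powr e1) *
          esssup (restrict_space lebesgue (ball x \<rho>)) (\<lambda>y. ereal (v y))
          \<le> ereal (C * set_lebesgue_integral lebesgue (ball x \<rho>) w / measure lebesgue (ball x \<rho>)) \<and>
        ereal (measure lebesgue (ball x \<rho>) powr a0) *
          esssup (restrict_space lebesgue (UNIV - ball x \<rho>)) (\<lambda>y. ereal (v y / norm (x - y) powr p))
          \<le> ereal (C * set_lebesgue_integral lebesgue (ball x \<rho>) w / measure lebesgue (ball x \<rho>))"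
        using ball_r1_fwd[OF vm v0 _ p0 _ \<kappa>_def k_def H[unfolded N_def]] e1e unfolding N_def by blast
    next
      assume "\<exists>C. \<forall>x. \<forall>\<rho>>0.
        ereal (measure lebesgue (ball x \<rho>) powr e1) *
          esssup (restrict_space lebesgue (ball x \<rho>)) (\<lambda>y. ereal (v y))
          \<le> ereal (C * set_lebesgue_integral lebesgue (ball x \<rho>) w / measure lebesgue (ball x \<rho>)) \<and>
        ereal (measure lebesgue (ball x \<rho>) powr a0) *
          esssup (restrict_space lebesgue (UNIV - ball x \<rho>)) (\<lambda>y. ereal (v y / norm (x - y) powr p))
          \<le> ereal (C * set_lebesgue_integral lebesgue (ball x \<rho>) w / measure lebesgue (ball x \<rho>))"
      then obtain C where LG: "\<And>x \<rho>. \<rho> > 0 \<Longrightarrow>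
        ereal (measure lebesgue (ball x \<rho>) powr e1) *
          esssup (restrict_space lebesgue (ball x \<rho>)) (\<lambda>y. ereal (v y))
          \<le> ereal (C * set_lebesgue_integral lebesgue (ball x \<rho>) w / measure lebesgue (ball x \<rho>)) \<and>
        ereal (measure lebesgue (ball x \<rho>) powr a0) *
          esssup (restrict_space lebesgue (UNIV - ball x \<rho>)) (\<lambda>y. ereal (v y / norm (x - y) powr p))
          \<le> ereal (C * set_lebesgue_integral lebesgue (ball x \<rho>) w / measure lebesgue (ball x \<rho>))" by blast
      show "\<exists>C. \<forall>x. \<forall>\<rho>>0. ereal (measure lebesgue (ball x \<rho>) powr a0) *
        esssup lebesgue (\<lambda>y. ereal (v y / (measure lebesgue (ball x \<rho>) powr (1 / N) + norm (x - y)) powr p))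
        \<le> ereal (C * set_lebesgue_integral lebesgue (ball x \<rho>) w / measure lebesgue (ball x \<rho>))"
        using ball_r1_bwd[OF vm v0 _ p0 _ conjunct1[OF LG] conjunct2[OF LG]] e1e unfolding N_def by blast
    qed
  qed
qed

end
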